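(* If $\{A\}\ \Gamma ; \Delta \vdash \mathcal{C}_1$, and $\mathcal{C}_1 \longrightarrow \mathcal{C}_2$, then there exists some $\mathcal{D}$ such that $[\![\mathcal{C}_1]\!] \longrightarrow^* \mathcal{D}$ with $\mathcal{D} \equiv [\![\mathcal{C}_2]\!]$.
   Context: $\lambda_{\text{ch}}$ is a concurrent fine-grain call-by-value $\lambda$-calculus with asynchronous channels (primitives $\mathsf{fork}$, $\mathsf{give}$, $\mathsf{take}$, $\mathsf{newCh}$; configurations built from parallel composition, name restriction $(\nu a)$, terms and buffers $a(\vec V)$), extended with products, sums, recursive functions and iso-recursive types (hence lists). $\lambda_{\text{act}}$ is the analogous actor calculus (primitives $\mathsf{spawn}$, $\mathsf{send}$, $\mathsf{receive}$, $\mathsf{self}$; configurations built from parallel composition, $(\nu a)$ and actors $\langle a, M, \vec V\rangle$ with name $a$, running term $M$, mailbox $\vec V$). $\longrightarrow$ is configuration reduction (modulo structural congruence $\equiv$: commutativity/associativity of $\parallel$, scope extrusion), $\longrightarrow^*$ its reflexive-transitive closure. $\{A\}\ \Gamma;\Delta \vdash \mathcal{C}$ is the $\lambda_{\text{ch}}$ configuration typing judgement where every channel has the same type $A$. $[\![-]\!]$ is the translation from $\lambda_{\text{ch}}$ into $\lambda_{\text{act}}$ w.r.t. channel type $A$: $[\![\mathsf{Chan}]\!] = \mathsf{ActorRef}([\![A]\!] + \mathsf{ActorRef}([\![A]\!]))$; $\mathsf{give}\,V\,W \mapsto \mathsf{send}\,(\mathsf{inl}\,[\![V]\!])\,[\![W]\!]$;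 $\mathsf{take}\,V \mapsto$ let $selfPid \Leftarrow \mathsf{self}$ in $\mathsf{send}\,(\mathsf{inr}\,selfPid)\,[\![V]\!]$; $\mathsf{receive}$; $\mathsf{fork}\,M \mapsto$ let $x \Leftarrow \mathsf{spawn}\,[\![M]\!]$ in $\mathsf{return}\,()$; $\mathsf{newCh} \mapsto \mathsf{spawn}\,(\mathit{body}\,([\,],[\,]))$, where $\mathit{body}$ is a recursive loop holding a pair (list of buffered values, list of waiting pids): on receiving $\mathsf{inl}\,v$ it appends $v$ to the values, on $\mathsf{inr}\,pid$ it appends $pid$ to the waiting pids, and then calls $\mathit{drain}$, which, if both lists are non-empty, sends the head value to the head pid and removes both. On configurations the translation is homomorphic on $\parallel$ and $\nu$; a term $M$ becomes $(\nu a)\langle a, [\![M]\!], \epsilon\rangle$ for fresh $a$; a buffer $a(\vec V)$ becomes $\langle a, \mathit{body}\,([\![\vec V]\!], [\,]), \epsilon\rangle$ with $[\![\vec V]\!]$ the term-level list of translated values. *)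

theory Defs
  imports Main
begin

type_synonym name = nat

text \<open>Under the judgement {A} every channel has
  the same payload type A, so there is a single channel type TChan (the type Chan of the
  paper). Iso-recursive types use de Bruijn type variables.\<close>

datatype ty = TUnit | TFun ty ty | TChan | TProd ty ty | TSum ty ty | TMu ty | TVar nat

fun tlift :: "nat \<Rightarrow> ty \<Rightarrow> ty" where
  "tlift k TUnit = TUnit"
| "tlift k (TFun S T) = TFun (tlift k S) (tlift k T)"
| "tlift k TChan = TChan"
| "tlift k (TProd S T) = TProd (tlift k S) (tlift k T)"
| "tlift k (TSum S T) = TSum (tlift k S) (tlift k T)"
| "tlift k (TMu T) = TMu (tlift (Suc k) T)"
| "tlift k (TVar i) = (if i < k then TVar i else TVar (Suc i))"

fun tsubst :: "nat \<Rightarrow> ty \<Rightarrow> ty \<Rightarrow> ty" where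
  "tsubst k U TUnit = TUnit"
| "tsubst k U (TFun S T) = TFun (tsubst k U S) (tsubst k U T)"
| "tsubst k U TChan = TChan"
| "tsubst k U (TProd S T) = TProd (tsubst k U S) (tsubst k U T)"
| "tsubst k U (TSum S T) = TSum (tsubst k U S) (tsubst k U T)"
| "tsubst k U (TMu T) = TMu (tsubst (Suc k) (tlift 0 U) T)"
| "tsubst k U (TVar i) = (if i < k then TVar i else if i = k then U else TVar (i - 1))"

definition unfold_mu :: "ty \<Rightarrow> ty" where
  "unfold_mu T = tsubst 0 (TMu T) T"

definition swap_name :: "name \<Rightarrow> name \<Rightarrow> name \<Rightarrow> name" where
  "swap_name a b c = (if c = a then b else if c = b then a else c)"

text \<open>Configurations: parallel composition, name restriction, and a leaf
  (a term or a buffer in lambda-ch; an actor in lambda-act).\<close>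

datatype 'l cfg = Par "'l cfg" "'l cfg" | Nu name "'l cfg" | Leaf 'l

fun cfg_fn :: "('l \<Rightarrow> name set) \<Rightarrow> 'l cfg \<Rightarrow> name set" where
  "cfg_fn f (Par C D) = cfg_fn f C \<union> cfg_fn f D"
| "cfg_fn f (Nu a C) = cfg_fn f C - {a}"
| "cfg_fn f (Leaf l) = f l"

fun cfg_swap :: "(name \<Rightarrow> name \<Rightarrow> 'l \<Rightarrow> 'l) \<Rightarrow> name \<Rightarrow> name \<Rightarrow> 'l cfg \<Rightarrow> 'l cfg" where
  "cfg_swap s a b (Par C D) = Par (cfg_swap s a b C) (cfg_swap s a b D)"
| "cfg_swap s a b (Nu c C) = Nu (swap_name a b c) (cfg_swap s a b C)"
| "cfg_swap s a b (Leaf l) = Leaf (s a b l)"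

text \<open>Structural congruence: equivalence, commutativity and associativity of parallel
  composition, scope extrusion, closure under the contexts  G ::= [] | (nu a) G | G || C,
  together with the standard implicit conventions: exchange of restrictions and
  alpha-conversion of restricted names.\<close>

inductive scong :: "('l \<Rightarrow> name set) \<Rightarrow> (name \<Rightarrow> name \<Rightarrow> 'l \<Rightarrow> 'l) \<Rightarrow> 'l cfg \<Rightarrow> 'l cfg \<Rightarrow> bool"
  for f :: "'l \<Rightarrow> name set" and s :: "name \<Rightarrow> name \<Rightarrow> 'l \<Rightarrow> 'l" where
  sc_refl: "scong f s C C"
| sc_sym: "scong f s C D \<Longrightarrow> scong f s D C"
| sc_trans: "scong f s C D \<Longrightarrow> scong f s D E \<Longrightarrow> scong f s C E"
| sc_comm: "scong f s (Par C D) (Par D C)"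
| sc_assoc: "scong f s (Par C (Par D E)) (Par (Par C D) E)"
| sc_extr: "a \<notin> cfg_fn f C \<Longrightarrow> scong f s (Par C (Nu a D)) (Nu a (Par C D))"
| sc_nu_comm: "scong f s (Nu a (Nu b C)) (Nu b (Nu a C))"
| sc_alpha: "b \<notin> cfg_fn f (Nu a C) \<Longrightarrow> scong f s (Nu a C) (Nu b (cfg_swap s a b C))"
| sc_par: "scong f s C D \<Longrightarrow> scong f s (Par C E) (Par D E)"
| sc_nu: "scong f s C D \<Longrightarrow> scong f s (Nu a C) (Nu a D)"

section \<open>lambda-ch: syntax\<close>

text \<open>Fine-grain call-by-value terms, de Bruijn indices for term variables.
  CLam M binds index 0 in M; CRec M (rec f(x).M) binds x as index 0 and f as index 1;
  CLet M N binds index 0 in N; CLetPair V M (let (x,y) = V in M) binds y as 0 and x as 1;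
  CCase V M N binds index 0 in each branch. Lists are  mu t. 1 + (A * t).\<close>

datatype chv = CVar nat | CName name | CLam cht | CRec cht | CUnit | CPair chv chv
  | CInl chv | CInr chv | CRoll chv
and cht = CApp chv chv | CLet cht cht | CReturn chv | CLetPair chv cht | CCase chv cht cht
  | CUnroll chv | CFork cht | CGive chv chv | CTake chv | CNewCh

primrec chv_lift :: "nat \<Rightarrow> chv \<Rightarrow> chv" and cht_lift :: "nat \<Rightarrow> cht \<Rightarrow> cht" where
  "chv_lift k (CVar i) = (if i < k then CVar i else CVar (Suc i))"
| "chv_lift k (CName a) = CName a"
| "chv_lift k (CLam M) = CLam (cht_lift (Suc k) M)"
| "chv_lift k (CRec M) = CRec (cht_lift (Suc (Suc k)) M)"
| "chv_lift k CUnit = CUnit"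
| "chv_lift k (CPair V W) = CPair (chv_lift k V) (chv_lift k W)"
| "chv_lift k (CInl V) = CInl (chv_lift k V)"
| "chv_lift k (CInr V) = CInr (chv_lift k V)"
| "chv_lift k (CRoll V) = CRoll (chv_lift k V)"
| "cht_lift k (CApp V W) = CApp (chv_lift k V) (chv_lift k W)"
| "cht_lift k (CLet M N) = CLet (cht_lift k M) (cht_lift (Suc k) N)"
| "cht_lift k (CReturn V) = CReturn (chv_lift k V)"
| "cht_lift k (CLetPair V M) = CLetPair (chv_lift k V) (cht_lift (Suc (Suc k)) M)"
| "cht_lift k (CCase V M N) = CCase (chv_lift k V) (cht_lift (Suc k) M) (cht_lift (Suc k) N)"
| "cht_lift k (CUnroll V) = CUnroll (chv_lift k V)"
| "cht_lift k (CFork M) = CFork (cht_lift k M)"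
| "cht_lift k (CGive V W) = CGive (chv_lift k V) (chv_lift k W)"
| "cht_lift k (CTake V) = CTake (chv_lift k V)"
| "cht_lift k CNewCh = CNewCh"

primrec chv_subst :: "nat \<Rightarrow> chv \<Rightarrow> chv \<Rightarrow> chv" and cht_subst :: "nat \<Rightarrow> chv \<Rightarrow> cht \<Rightarrow> cht" where
  "chv_subst k U (CVar i) = (if i < k then CVar i else if i = k then U else CVar (i - 1))"
| "chv_subst k U (CName a) = CName a"
| "chv_subst k U (CLam M) = CLam (cht_subst (Suc k) (chv_lift 0 U) M)"
| "chv_subst k U (CRec M) = CRec (cht_subst (Suc (Suc k)) (chv_lift 0 (chv_lift 0 U)) M)"
| "chv_subst k U CUnit = CUnit"
| "chv_subst k U (CPair V W) = CPair (chv_subst k U V) (chv_subst k U W)"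
| "chv_subst k U (CInl V) = CInl (chv_subst k U V)"
| "chv_subst k U (CInr V) = CInr (chv_subst k U V)"
| "chv_subst k U (CRoll V) = CRoll (chv_subst k U V)"
| "cht_subst k U (CApp V W) = CApp (chv_subst k U V) (chv_subst k U W)"
| "cht_subst k U (CLet M N) = CLet (cht_subst k U M) (cht_subst (Suc k) (chv_lift 0 U) N)"
| "cht_subst k U (CReturn V) = CReturn (chv_subst k U V)"
| "cht_subst k U (CLetPair V M) =
     CLetPair (chv_subst k U V) (cht_subst (Suc (Suc k)) (chv_lift 0 (chv_lift 0 U)) M)"
| "cht_subst k U (CCase V M N) =
     CCase (chv_subst k U V) (cht_subst (Suc k) (chv_lift 0 U) M) (cht_subst (Suc k) (chv_lift 0 U) N)"
| "cht_subst k U (CUnroll V) = CUnroll (chv_subst k U V)"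
| "cht_subst k U (CFork M) = CFork (cht_subst k U M)"
| "cht_subst k U (CGive V W) = CGive (chv_subst k U V) (chv_subst k U W)"
| "cht_subst k U (CTake V) = CTake (chv_subst k U V)"
| "cht_subst k U CNewCh = CNewCh"

primrec chv_fn :: "chv \<Rightarrow> name set" and cht_fn :: "cht \<Rightarrow> name set" where
  "chv_fn (CVar i) = {}"
| "chv_fn (CName a) = {a}"
| "chv_fn (CLam M) = cht_fn M"
| "chv_fn (CRec M) = cht_fn M"
| "chv_fn CUnit = {}"
| "chv_fn (CPair V W) = chv_fn V \<union> chv_fn W"
| "chv_fn (CInl V) = chv_fn V"
| "chv_fn (CInr V) = chv_fn V"
| "chv_fn (CRoll V) = chv_fn V"
| "cht_fn (CApp V W) = chv_fn V \<union> chv_fn W"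
| "cht_fn (CLet M N) = cht_fn M \<union> cht_fn N"
| "cht_fn (CReturn V) = chv_fn V"
| "cht_fn (CLetPair V M) = chv_fn V \<union> cht_fn M"
| "cht_fn (CCase V M N) = chv_fn V \<union> cht_fn M \<union> cht_fn N"
| "cht_fn (CUnroll V) = chv_fn V"
| "cht_fn (CFork M) = cht_fn M"
| "cht_fn (CGive V W) = chv_fn V \<union> chv_fn W"
| "cht_fn (CTake V) = chv_fn V"
| "cht_fn CNewCh = {}"

primrec chv_swap :: "name \<Rightarrow> name \<Rightarrow> chv \<Rightarrow> chv" and cht_swap :: "name \<Rightarrow> name \<Rightarrow> cht \<Rightarrow> cht" where
  "chv_swap a b (CVar i) = CVar i"
| "chv_swap a b (CName c) = CName (swap_name a b c)"
| "chv_swap a b (CLam M) = CLam (cht_swap a b M)"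
| "chv_swap a b (CRec M) = CRec (cht_swap a b M)"
| "chv_swap a b CUnit = CUnit"
| "chv_swap a b (CPair V W) = CPair (chv_swap a b V) (chv_swap a b W)"
| "chv_swap a b (CInl V) = CInl (chv_swap a b V)"
| "chv_swap a b (CInr V) = CInr (chv_swap a b V)"
| "chv_swap a b (CRoll V) = CRoll (chv_swap a b V)"
| "cht_swap a b (CApp V W) = CApp (chv_swap a b V) (chv_swap a b W)"
| "cht_swap a b (CLet M N) = CLet (cht_swap a b M) (cht_swap a b N)"
| "cht_swap a b (CReturn V) = CReturn (chv_swap a b V)"
| "cht_swap a b (CLetPair V M) = CLetPair (chv_swap a b V) (cht_swap a b M)"
| "cht_swap a b (CCase V M N) = CCase (chv_swap a b V) (cht_swap a b M) (cht_swap a b N)"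
| "cht_swap a b (CUnroll V) = CUnroll (chv_swap a b V)"
| "cht_swap a b (CFork M) = CFork (cht_swap a b M)"
| "cht_swap a b (CGive V W) = CGive (chv_swap a b V) (chv_swap a b W)"
| "cht_swap a b (CTake V) = CTake (chv_swap a b V)"
| "cht_swap a b CNewCh = CNewCh"

datatype chctx = CHole | CELet chctx cht

primrec ch_plug :: "chctx \<Rightarrow> cht \<Rightarrow> cht" where
  "ch_plug CHole M = M"
| "ch_plug (CELet E N) M = CLet (ch_plug E M) N"

datatype chleaf = Thread cht | Buf name "chv list"

primrec chleaf_fn :: "chleaf \<Rightarrow> name set" where
  "chleaf_fn (Thread M) = cht_fn M"
| "chleaf_fn (Buf a Vs) = insert a (\<Union>V\<in>set Vs. chv_fn V)"

primrec chleaf_swap :: "name \<Rightarrow> name \<Rightarrow> chleaf \<Rightarrow> chleaf" where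
  "chleaf_swap a b (Thread M) = Thread (cht_swap a b M)"
| "chleaf_swap a b (Buf c Vs) = Buf (swap_name a b c) (map (chv_swap a b) Vs)"

type_synonym chcfg = "chleaf cfg"

abbreviation ch_cong :: "chcfg \<Rightarrow> chcfg \<Rightarrow> bool" where
  "ch_cong \<equiv> scong chleaf_fn chleaf_swap"

section \<open>lambda-ch: typing, with every channel of payload type A\<close>

text \<open>The environment Gamma consists of a set N of names (each of type Chan, since every
  channel has type A) and a list G of types of the de Bruijn term variables.
  The buffer environment Delta is the set of names of buffers, each of payload type A.\<close>

inductive ch_vty :: "ty \<Rightarrow> name set \<Rightarrow> ty list \<Rightarrow> chv \<Rightarrow> ty \<Rightarrow> bool"
  and ch_tty :: "ty \<Rightarrow> name set \<Rightarrow> ty list \<Rightarrow> cht \<Rightarrow> ty \<Rightarrow> bool"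
  for A :: ty where
  tv_var: "i < length G \<Longrightarrow> ch_vty A N G (CVar i) (G ! i)"
| tv_name: "a \<in> N \<Longrightarrow> ch_vty A N G (CName a) TChan"
| tv_lam: "ch_tty A N (T1 # G) M T2 \<Longrightarrow> ch_vty A N G (CLam M) (TFun T1 T2)"
| tv_rec: "ch_tty A N (T1 # TFun T1 T2 # G) M T2 \<Longrightarrow> ch_vty A N G (CRec M) (TFun T1 T2)"
| tv_unit: "ch_vty A N G CUnit TUnit"
| tv_pair: "ch_vty A N G V T1 \<Longrightarrow> ch_vty A N G W T2 \<Longrightarrow> ch_vty A N G (CPair V W) (TProd T1 T2)"
| tv_inl: "ch_vty A N G V T1 \<Longrightarrow> ch_vty A N G (CInl V) (TSum T1 T2)"
| tv_inr: "ch_vty A N G V T2 \<Longrightarrow> ch_vty A N G (CInr V) (TSum T1 T2)"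
| tv_roll: "ch_vty A N G V (unfold_mu T) \<Longrightarrow> ch_vty A N G (CRoll V) (TMu T)"
| tt_app: "ch_vty A N G V (TFun T1 T2) \<Longrightarrow> ch_vty A N G W T1 \<Longrightarrow> ch_tty A N G (CApp V W) T2"
| tt_let: "ch_tty A N G M T1 \<Longrightarrow> ch_tty A N (T1 # G) M' T2 \<Longrightarrow> ch_tty A N G (CLet M M') T2"
| tt_return: "ch_vty A N G V T \<Longrightarrow> ch_tty A N G (CReturn V) T"
| tt_letpair: "ch_vty A N G V (TProd T1 T2) \<Longrightarrow> ch_tty A N (T2 # T1 # G) M T
    \<Longrightarrow> ch_tty A N G (CLetPair V M) T"
| tt_case: "ch_vty A N G V (TSum T1 T2) \<Longrightarrow> ch_tty A N (T1 # G) M T \<Longrightarrow> ch_tty A N (T2 # G) M' T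
    \<Longrightarrow> ch_tty A N G (CCase V M M') T"
| tt_unroll: "ch_vty A N G V (TMu T) \<Longrightarrow> ch_tty A N G (CUnroll V) (unfold_mu T)"
| tt_fork: "ch_tty A N G M TUnit \<Longrightarrow> ch_tty A N G (CFork M) TUnit"
| tt_give: "ch_vty A N G V A \<Longrightarrow> ch_vty A N G W TChan \<Longrightarrow> ch_tty A N G (CGive V W) TUnit"
| tt_take: "ch_vty A N G V TChan \<Longrightarrow> ch_tty A N G (CTake V) A"
| tt_newch: "ch_tty A N G CNewCh TChan"

text \<open>Configuration typing  {A} Gamma; Delta |- C.\<close>
inductive ch_cty :: "ty \<Rightarrow> name set \<Rightarrow> ty list \<Rightarrow> name set \<Rightarrow> chcfg \<Rightarrow> bool"
  for A :: ty where
  tc_par: "ch_cty A N G D1 C1 \<Longrightarrow> ch_cty A N G D2 C2 \<Longrightarrow> D1 \<inter> D2 = {}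
    \<Longrightarrow> ch_cty A N G (D1 \<union> D2) (Par C1 C2)"
| tc_nu: "ch_cty A (insert a N) G (insert a D) C \<Longrightarrow> a \<notin> D \<Longrightarrow> ch_cty A N G D (Nu a C)"
| tc_thread: "ch_tty A N G M T \<Longrightarrow> ch_cty A N G {} (Leaf (Thread M))"
| tc_buf: "(\<forall>V\<in>set Vs. ch_vty A N G V A) \<Longrightarrow> ch_cty A N G {a} (Leaf (Buf a Vs))"

inductive ch_tred :: "cht \<Rightarrow> cht \<Rightarrow> bool" where
  ct_lam: "ch_tred (CApp (CLam M) V) (cht_subst 0 V M)"
| ct_rec: "ch_tred (CApp (CRec M) V) (cht_subst 0 (CRec M) (cht_subst 0 (chv_lift 0 V) M))"
| ct_let: "ch_tred (CLet (CReturn V) M) (cht_subst 0 V M)"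
| ct_pair: "ch_tred (CLetPair (CPair V W) M) (cht_subst 0 V (cht_subst 0 (chv_lift 0 W) M))"
| ct_inl: "ch_tred (CCase (CInl V) M N) (cht_subst 0 V M)"
| ct_inr: "ch_tred (CCase (CInr V) M N) (cht_subst 0 V N)"
| ct_roll: "ch_tred (CUnroll (CRoll V)) (CReturn V)"
| ct_ctx: "ch_tred M M' \<Longrightarrow> ch_tred (ch_plug E M) (ch_plug E M')"

inductive ch_red :: "chcfg \<Rightarrow> chcfg \<Rightarrow> bool" where
  cr_give: "ch_red (Par (Leaf (Thread (ch_plug E (CGive W (CName a))))) (Leaf (Buf a Vs)))
                   (Par (Leaf (Thread (ch_plug E (CReturn CUnit)))) (Leaf (Buf a (Vs @ [W]))))"
| cr_take: "ch_red (Par (Leaf (Thread (ch_plug E (CTake (CName a))))) (Leaf (Buf a (W # Vs))))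
                   (Par (Leaf (Thread (ch_plug E (CReturn W)))) (Leaf (Buf a Vs)))"
| cr_fork: "ch_red (Leaf (Thread (ch_plug E (CFork M))))
                   (Par (Leaf (Thread (ch_plug E (CReturn CUnit)))) (Leaf (Thread M)))"
| cr_newch: "a \<notin> cht_fn (ch_plug E CNewCh) \<Longrightarrow>
             ch_red (Leaf (Thread (ch_plug E CNewCh)))
                    (Nu a (Par (Leaf (Thread (ch_plug E (CReturn (CName a))))) (Leaf (Buf a []))))"
| cr_liftm: "ch_tred M M' \<Longrightarrow> ch_red (Leaf (Thread M)) (Leaf (Thread M'))"
| cr_par: "ch_red C C' \<Longrightarrow> ch_red (Par C D) (Par C' D)"
| cr_nu: "ch_red C C' \<Longrightarrow> ch_red (Nu a C) (Nu a C')"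
| cr_struct: "ch_cong C C' \<Longrightarrow> ch_red C' D' \<Longrightarrow> ch_cong D' D \<Longrightarrow> ch_red C D"

section \<open>lambda-act: syntax\<close>

datatype acv = AVar nat | AName name | ALam actm | ARec actm | AUnit | APair acv acv
  | AInl acv | AInr acv | ARoll acv
and actm = AApp acv acv | ALet actm actm | AReturn acv | ALetPair acv actm | ACase acv actm actm
  | AUnroll acv | ASpawn actm | ASend acv acv | AReceive | ASelf

primrec acv_lift :: "nat \<Rightarrow> acv \<Rightarrow> acv" and actm_lift :: "nat \<Rightarrow> actm \<Rightarrow> actm" where
  "acv_lift k (AVar i) = (if i < k then AVar i else AVar (Suc i))"
| "acv_lift k (AName a) = AName a"
| "acv_lift k (ALam M) = ALam (actm_lift (Suc k) M)"
| "acv_lift k (ARec M) = ARec (actm_lift (Suc (Suc k)) M)"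
| "acv_lift k AUnit = AUnit"
| "acv_lift k (APair V W) = APair (acv_lift k V) (acv_lift k W)"
| "acv_lift k (AInl V) = AInl (acv_lift k V)"
| "acv_lift k (AInr V) = AInr (acv_lift k V)"
| "acv_lift k (ARoll V) = ARoll (acv_lift k V)"
| "actm_lift k (AApp V W) = AApp (acv_lift k V) (acv_lift k W)"
| "actm_lift k (ALet M N) = ALet (actm_lift k M) (actm_lift (Suc k) N)"
| "actm_lift k (AReturn V) = AReturn (acv_lift k V)"
| "actm_lift k (ALetPair V M) = ALetPair (acv_lift k V) (actm_lift (Suc (Suc k)) M)"
| "actm_lift k (ACase V M N) = ACase (acv_lift k V) (actm_lift (Suc k) M) (actm_lift (Suc k) N)"
| "actm_lift k (AUnroll V) = AUnroll (acv_lift k V)"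
| "actm_lift k (ASpawn M) = ASpawn (actm_lift k M)"
| "actm_lift k (ASend V W) = ASend (acv_lift k V) (acv_lift k W)"
| "actm_lift k AReceive = AReceive"
| "actm_lift k ASelf = ASelf"

primrec acv_subst :: "nat \<Rightarrow> acv \<Rightarrow> acv \<Rightarrow> acv" and actm_subst :: "nat \<Rightarrow> acv \<Rightarrow> actm \<Rightarrow> actm" where
  "acv_subst k U (AVar i) = (if i < k then AVar i else if i = k then U else AVar (i - 1))"
| "acv_subst k U (AName a) = AName a"
| "acv_subst k U (ALam M) = ALam (actm_subst (Suc k) (acv_lift 0 U) M)"
| "acv_subst k U (ARec M) = ARec (actm_subst (Suc (Suc k)) (acv_lift 0 (acv_lift 0 U)) M)"
| "acv_subst k U AUnit = AUnit"
| "acv_subst k U (APair V W) = APair (acv_subst k U V) (acv_subst k U W)"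
| "acv_subst k U (AInl V) = AInl (acv_subst k U V)"
| "acv_subst k U (AInr V) = AInr (acv_subst k U V)"
| "acv_subst k U (ARoll V) = ARoll (acv_subst k U V)"
| "actm_subst k U (AApp V W) = AApp (acv_subst k U V) (acv_subst k U W)"
| "actm_subst k U (ALet M N) = ALet (actm_subst k U M) (actm_subst (Suc k) (acv_lift 0 U) N)"
| "actm_subst k U (AReturn V) = AReturn (acv_subst k U V)"
| "actm_subst k U (ALetPair V M) =
     ALetPair (acv_subst k U V) (actm_subst (Suc (Suc k)) (acv_lift 0 (acv_lift 0 U)) M)"
| "actm_subst k U (ACase V M N) =
     ACase (acv_subst k U V) (actm_subst (Suc k) (acv_lift 0 U) M) (actm_subst (Suc k) (acv_lift 0 U) N)"
| "actm_subst k U (AUnroll V) = AUnroll (acv_subst k U V)"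
| "actm_subst k U (ASpawn M) = ASpawn (actm_subst k U M)"
| "actm_subst k U (ASend V W) = ASend (acv_subst k U V) (acv_subst k U W)"
| "actm_subst k U AReceive = AReceive"
| "actm_subst k U ASelf = ASelf"

primrec acv_fn :: "acv \<Rightarrow> name set" and actm_fn :: "actm \<Rightarrow> name set" where
  "acv_fn (AVar i) = {}"
| "acv_fn (AName a) = {a}"
| "acv_fn (ALam M) = actm_fn M"
| "acv_fn (ARec M) = actm_fn M"
| "acv_fn AUnit = {}"
| "acv_fn (APair V W) = acv_fn V \<union> acv_fn W"
| "acv_fn (AInl V) = acv_fn V"
| "acv_fn (AInr V) = acv_fn V"
| "acv_fn (ARoll V) = acv_fn V"
| "actm_fn (AApp V W) = acv_fn V \<union> acv_fn W"
| "actm_fn (ALet M N) = actm_fn M \<union> actm_fn N"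
| "actm_fn (AReturn V) = acv_fn V"
| "actm_fn (ALetPair V M) = acv_fn V \<union> actm_fn M"
| "actm_fn (ACase V M N) = acv_fn V \<union> actm_fn M \<union> actm_fn N"
| "actm_fn (AUnroll V) = acv_fn V"
| "actm_fn (ASpawn M) = actm_fn M"
| "actm_fn (ASend V W) = acv_fn V \<union> acv_fn W"
| "actm_fn AReceive = {}"
| "actm_fn ASelf = {}"

primrec acv_swap :: "name \<Rightarrow> name \<Rightarrow> acv \<Rightarrow> acv" and actm_swap :: "name \<Rightarrow> name \<Rightarrow> actm \<Rightarrow> actm" where
  "acv_swap a b (AVar i) = AVar i"
| "acv_swap a b (AName c) = AName (swap_name a b c)"
| "acv_swap a b (ALam M) = ALam (actm_swap a b M)"
| "acv_swap a b (ARec M) = ARec (actm_swap a b M)"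
| "acv_swap a b AUnit = AUnit"
| "acv_swap a b (APair V W) = APair (acv_swap a b V) (acv_swap a b W)"
| "acv_swap a b (AInl V) = AInl (acv_swap a b V)"
| "acv_swap a b (AInr V) = AInr (acv_swap a b V)"
| "acv_swap a b (ARoll V) = ARoll (acv_swap a b V)"
| "actm_swap a b (AApp V W) = AApp (acv_swap a b V) (acv_swap a b W)"
| "actm_swap a b (ALet M N) = ALet (actm_swap a b M) (actm_swap a b N)"
| "actm_swap a b (AReturn V) = AReturn (acv_swap a b V)"
| "actm_swap a b (ALetPair V M) = ALetPair (acv_swap a b V) (actm_swap a b M)"
| "actm_swap a b (ACase V M N) = ACase (acv_swap a b V) (actm_swap a b M) (actm_swap a b N)"
| "actm_swap a b (AUnroll V) = AUnroll (acv_swap a b V)"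
| "actm_swap a b (ASpawn M) = ASpawn (actm_swap a b M)"
| "actm_swap a b (ASend V W) = ASend (acv_swap a b V) (acv_swap a b W)"
| "actm_swap a b AReceive = AReceive"
| "actm_swap a b ASelf = ASelf"

datatype acctx = AHole | AELet acctx actm

primrec ac_plug :: "acctx \<Rightarrow> actm \<Rightarrow> actm" where
  "ac_plug AHole M = M"
| "ac_plug (AELet E N) M = ALet (ac_plug E M) N"

text \<open>Leaves of lambda-act configurations: an actor  < a, M, mailbox >.\<close>
datatype acleaf = Actor name actm "acv list"

primrec acleaf_fn :: "acleaf \<Rightarrow> name set" where
  "acleaf_fn (Actor a M Vs) = insert a (actm_fn M \<union> (\<Union>V\<in>set Vs. acv_fn V))"

primrec acleaf_swap :: "name \<Rightarrow> name \<Rightarrow> acleaf \<Rightarrow> acleaf" where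
  "acleaf_swap a b (Actor c M Vs) = Actor (swap_name a b c) (actm_swap a b M) (map (acv_swap a b) Vs)"

type_synonym accfg = "acleaf cfg"

abbreviation act_cong :: "accfg \<Rightarrow> accfg \<Rightarrow> bool" where
  "act_cong \<equiv> scong acleaf_fn acleaf_swap"

inductive act_tred :: "actm \<Rightarrow> actm \<Rightarrow> bool" where
  at_lam: "act_tred (AApp (ALam M) V) (actm_subst 0 V M)"
| at_rec: "act_tred (AApp (ARec M) V) (actm_subst 0 (ARec M) (actm_subst 0 (acv_lift 0 V) M))"
| at_let: "act_tred (ALet (AReturn V) M) (actm_subst 0 V M)"
| at_pair: "act_tred (ALetPair (APair V W) M) (actm_subst 0 V (actm_subst 0 (acv_lift 0 W) M))"
| at_inl: "act_tred (ACase (AInl V) M N) (actm_subst 0 V M)"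
| at_inr: "act_tred (ACase (AInr V) M N) (actm_subst 0 V N)"
| at_roll: "act_tred (AUnroll (ARoll V)) (AReturn V)"
| at_ctx: "act_tred M M' \<Longrightarrow> act_tred (ac_plug E M) (ac_plug E M')"

inductive act_red :: "accfg \<Rightarrow> accfg \<Rightarrow> bool" where
  ar_spawn: "b \<noteq> a \<Longrightarrow> b \<notin> actm_fn (ac_plug E (ASpawn M)) \<Longrightarrow> b \<notin> (\<Union>V\<in>set Vs. acv_fn V) \<Longrightarrow>
     act_red (Leaf (Actor a (ac_plug E (ASpawn M)) Vs))
             (Nu b (Par (Leaf (Actor a (ac_plug E (AReturn (AName b))) Vs)) (Leaf (Actor b M []))))"
| ar_send: "act_red (Par (Leaf (Actor a (ac_plug E (ASend V' (AName b))) Vs)) (Leaf (Actor b M Ws)))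
                    (Par (Leaf (Actor a (ac_plug E (AReturn AUnit)) Vs)) (Leaf (Actor b M (Ws @ [V']))))"
| ar_send_self: "act_red (Leaf (Actor a (ac_plug E (ASend V' (AName a))) Vs))
                         (Leaf (Actor a (ac_plug E (AReturn AUnit)) (Vs @ [V'])))"
| ar_self: "act_red (Leaf (Actor a (ac_plug E ASelf) Vs))
                    (Leaf (Actor a (ac_plug E (AReturn (AName a))) Vs))"
| ar_receive: "act_red (Leaf (Actor a (ac_plug E AReceive) (W # Vs)))
                       (Leaf (Actor a (ac_plug E (AReturn W)) Vs))"
| ar_liftm: "act_tred M M' \<Longrightarrow> act_red (Leaf (Actor a M Vs)) (Leaf (Actor a M' Vs))"
| ar_par: "act_red C C' \<Longrightarrow> act_red (Par C D) (Par C' D)"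
| ar_nu: "act_red C C' \<Longrightarrow> act_red (Nu a C) (Nu a C')"
| ar_struct: "act_cong C C' \<Longrightarrow> act_red C' D' \<Longrightarrow> act_cong D' D \<Longrightarrow> act_red C D"

section \<open>The translation from lambda-ch into lambda-act\<close>

text \<open>Term-level lists: [] = roll (inl ()),  v :: vs = roll (inr (v, vs)).\<close>
definition a_nil :: acv where "a_nil = ARoll (AInl AUnit)"
definition a_cons :: "acv \<Rightarrow> acv \<Rightarrow> acv" where "a_cons v vs = ARoll (AInr (APair v vs))"

primrec a_list :: "acv list \<Rightarrow> acv" where
  "a_list [] = a_nil"
| "a_list (v # vs) = a_cons v (a_list vs)"

text \<open>List append:
  rec app(p). let (xs, ys) = p in let z <= unroll xs in
    case z { inl u -> return ys ;
             inr c -> let (h, t) = c in let r <= app (t, ys) in return (h :: r) }\<close>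
definition a_append :: acv where
  "a_append = ARec
     (ALetPair (AVar 0)
       (ALet (AUnroll (AVar 1))
         (ACase (AVar 0)
            (AReturn (AVar 2))
            (ALetPair (AVar 0)
               (ALet (AApp (AVar 7) (APair (AVar 0) (AVar 4)))
                  (AReturn (a_cons (AVar 2) (AVar 0))))))))"

text \<open>drain:
  \<lambda>x. let (vals, pids) = x in let u <= unroll vals in
    case u { inl _ -> return (vals, pids) ;
             inr c -> let w <= unroll pids in
               case w { inl _ -> return (vals, pids) ;
                        inr d -> let (v, vs) = c in let (pid, pids') = d in
                                 send v pid; return (vs, pids') } }\<close>
definition a_drain :: acv where
  "a_drain = ALam
     (ALetPair (AVar 0)
       (ALet (AUnroll (AVar 1))
         (ACase (AVar 0)
            (AReturn (APair (AVar 3) (AVar 2)))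
            (ALet (AUnroll (AVar 2))
               (ACase (AVar 0)
                  (AReturn (APair (AVar 5) (AVar 4)))
                  (ALetPair (AVar 2)
                     (ALetPair (AVar 2)
                        (ALet (ASend (AVar 3) (AVar 1))
                           (AReturn (APair (AVar 3) (AVar 1)))))))))))"

text \<open>body:
  rec body(state). let r <= receive in let (vals, pids) = state in
    case r { inl v   -> let vals' <= vals ++ [v] in let st <= drain (vals', pids) in body st ;
             inr pid -> let pids' <= pids ++ [pid] in let st <= drain (vals, pids') in body st }\<close>
definition a_body :: acv where
  "a_body = ARec
     (ALet AReceive
       (ALetPair (AVar 1)
         (ACase (AVar 2)
            (ALet (AApp a_append (APair (AVar 2) (a_cons (AVar 0) a_nil)))
               (ALet (AApp a_drain (APair (AVar 0) (AVar 2)))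
                  (AApp (AVar 7) (AVar 0))))
            (ALet (AApp a_append (APair (AVar 1) (a_cons (AVar 0) a_nil)))
               (ALet (AApp a_drain (APair (AVar 3) (AVar 0)))
                  (AApp (AVar 7) (AVar 0)))))))"

primrec tr_v :: "chv \<Rightarrow> acv" and tr_t :: "cht \<Rightarrow> actm" where
  "tr_v (CVar i) = AVar i"
| "tr_v (CName a) = AName a"
| "tr_v (CLam M) = ALam (tr_t M)"
| "tr_v (CRec M) = ARec (tr_t M)"
| "tr_v CUnit = AUnit"
| "tr_v (CPair V W) = APair (tr_v V) (tr_v W)"
| "tr_v (CInl V) = AInl (tr_v V)"
| "tr_v (CInr V) = AInr (tr_v V)"
| "tr_v (CRoll V) = ARoll (tr_v V)"
| "tr_t (CApp V W) = AApp (tr_v V) (tr_v W)"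
| "tr_t (CLet M N) = ALet (tr_t M) (tr_t N)"
| "tr_t (CReturn V) = AReturn (tr_v V)"
| "tr_t (CLetPair V M) = ALetPair (tr_v V) (tr_t M)"
| "tr_t (CCase V M N) = ACase (tr_v V) (tr_t M) (tr_t N)"
| "tr_t (CUnroll V) = AUnroll (tr_v V)"
| "tr_t (CFork M) = ALet (ASpawn (tr_t M)) (AReturn AUnit)"
| "tr_t (CGive V W) = ASend (AInl (tr_v V)) (tr_v W)"
| "tr_t (CTake V) = ALet ASelf (ALet (ASend (AInr (AVar 0)) (acv_lift 0 (tr_v V))) AReceive)"
| "tr_t CNewCh = ASpawn (AApp a_body (APair a_nil a_nil))"

definition fresh_name :: "name set \<Rightarrow> name" where
  "fresh_name S = (LEAST n. n \<notin> S)"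

fun tr_cfg :: "chcfg \<Rightarrow> accfg" where
  "tr_cfg (Par C D) = Par (tr_cfg C) (tr_cfg D)"
| "tr_cfg (Nu a C) = Nu a (tr_cfg C)"
| "tr_cfg (Leaf (Thread M)) =
     (let b = fresh_name (actm_fn (tr_t M)) in Nu b (Leaf (Actor b (tr_t M) [])))"
| "tr_cfg (Leaf (Buf a Vs)) =
     Leaf (Actor a (AApp a_body (APair (a_list (map tr_v Vs)) a_nil)) [])"

end

theory Submission
  imports Defs
begin

lemma lift_lift:
  "\<And>k j. k \<le> j \<Longrightarrow> acv_lift (Suc j) (acv_lift k V) = acv_lift k (acv_lift j V)"
  "\<And>k j. k \<le> j \<Longrightarrow> actm_lift (Suc j) (actm_lift k M) = actm_lift k (actm_lift j M)"
  by (induct V and M rule: acv.induct actm.induct) auto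

lemma subst_lift:
  "\<And>k U. acv_subst k U (acv_lift k V) = V"
  "\<And>k U. actm_subst k U (actm_lift k M) = M"
  by (induct V and M rule: acv.induct actm.induct) auto

lemma subst_lift2:
  "\<And>k j U. j \<le> k \<Longrightarrow> acv_subst (Suc k) (acv_lift j U) (acv_lift j V) = acv_lift j (acv_subst k U V)"
  "\<And>k j U. j \<le> k \<Longrightarrow> actm_subst (Suc k) (acv_lift j U) (actm_lift j M) = actm_lift j (actm_subst k U M)"
  by (induct V and M rule: acv.induct actm.induct) (auto simp: lift_lift[of 0, symmetric])

lemma fn_lift:
  "\<And>k. acv_fn (acv_lift k V) = acv_fn V"
  "\<And>k. actm_fn (actm_lift k M) = actm_fn M"
  by (induct V and M rule: acv.induct actm.induct) auto

lemma fn_subst: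
  "\<And>k U. acv_fn (acv_subst k U V) \<subseteq> acv_fn U \<union> acv_fn V"
  "\<And>k U. actm_fn (actm_subst k U M) \<subseteq> acv_fn U \<union> actm_fn M"
  apply (induct V and M rule: acv.induct actm.induct)
   apply (auto simp: fn_lift)
  apply (metis UnE fn_lift(1) subsetD)+
  done

lemma cfn_lift:
  "\<And>k. chv_fn (chv_lift k V) = chv_fn V"
  "\<And>k. cht_fn (cht_lift k M) = cht_fn M"
  by (induct V and M rule: chv.induct cht.induct) auto

lemma cfn_subst:
  "\<And>k U. chv_fn (chv_subst k U V) \<subseteq> chv_fn U \<union> chv_fn V"
  "\<And>k U. cht_fn (cht_subst k U M) \<subseteq> chv_fn U \<union> cht_fn M"
  apply (induct V and M rule: chv.induct cht.induct)
   apply (auto simp: cfn_lift)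
  apply (metis UnE cfn_lift(1) subsetD)+
  done

lemma tr_lift:
  "\<And>k. tr_v (chv_lift k V) = acv_lift k (tr_v V)"
  "\<And>k. tr_t (cht_lift k M) = actm_lift k (tr_t M)"
  by (induct V and M rule: chv.induct cht.induct) (auto simp: lift_lift a_body_def a_append_def a_drain_def a_nil_def a_cons_def)

lemma tr_subst:
  "\<And>k U. tr_v (chv_subst k U V) = acv_subst k (tr_v U) (tr_v V)"
  "\<And>k U. tr_t (cht_subst k U M) = actm_subst k (tr_v U) (tr_t M)"
  by (induct V and M rule: chv.induct cht.induct) (auto simp: tr_lift subst_lift2[where j=0, simplified] a_body_def a_append_def a_drain_def a_nil_def a_cons_def)

lemma tr_fn:
  "acv_fn (tr_v V) = chv_fn V"
  "actm_fn (tr_t M) = cht_fn M"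
  by (induct V and M rule: chv.induct cht.induct) (auto simp: fn_lift a_body_def a_append_def a_drain_def a_nil_def a_cons_def)

lemma swap_name_simps[simp]: "swap_name a b a = b" "swap_name a b b = a"
  "c \<noteq> a \<Longrightarrow> c \<noteq> b \<Longrightarrow> swap_name a b c = c"
  by (auto simp: swap_name_def)

lemma swap_lift:
  "\<And>k. acv_swap a b (acv_lift k V) = acv_lift k (acv_swap a b V)"
  "\<And>k. actm_swap a b (actm_lift k M) = actm_lift k (actm_swap a b M)"
  by (induct V and M rule: acv.induct actm.induct) auto

lemma tr_swap:
  "tr_v (chv_swap a b V) = acv_swap a b (tr_v V)"
  "tr_t (cht_swap a b M) = actm_swap a b (tr_t M)"
  by (induct V and M rule: chv.induct cht.induct) (auto simp: swap_lift a_body_def a_append_def a_drain_def a_nil_def a_cons_def)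

lemma swap_id:
  "a \<notin> acv_fn V \<Longrightarrow> b \<notin> acv_fn V \<Longrightarrow> acv_swap a b V = V"
  "a \<notin> actm_fn M \<Longrightarrow> b \<notin> actm_fn M \<Longrightarrow> actm_swap a b M = M"
  by (induct V and M rule: acv.induct actm.induct) (auto simp: swap_name_def)

lemma fn_swap:
  "acv_fn (acv_swap a b V) = swap_name a b ` acv_fn V"
  "actm_fn (actm_swap a b M) = swap_name a b ` actm_fn M"
  by (induct V and M rule: acv.induct actm.induct) (auto simp: image_Un)

lemma fin_fn:
  "finite (acv_fn V)" "finite (actm_fn M)"
  by (induct V and M rule: acv.induct actm.induct) auto

lemma fresh_name: "finite S \<Longrightarrow> fresh_name S \<notin> S"
  unfolding fresh_name_def
  by (metis LeastI_ex ex_new_if_finite infinite_UNIV_nat)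

definition liftn :: "nat \<Rightarrow> acv \<Rightarrow> acv" where "liftn n V = (acv_lift 0 ^^ n) V"

lemma liftn_0: "liftn 0 V = V" by (simp add: liftn_def)
lemma liftn_Suc: "liftn (Suc n) V = acv_lift 0 (liftn n V)" by (simp add: liftn_def)

lemma lift_liftn[simp]: "k \<le> n \<Longrightarrow> acv_lift k (liftn n V) = liftn (Suc n) V"
proof (induct n arbitrary: k)
  case 0 then show ?case by (simp add: liftn_Suc)
next
  case (Suc n)
  show ?case
  proof (cases k)
    case 0 then show ?thesis by (simp add: liftn_Suc)
  next
    case (Suc k')
    then have "acv_lift k (liftn (Suc n) V) = acv_lift 0 (acv_lift k' (liftn n V))"
      by (simp add: liftn_Suc lift_lift)
    also have "\<dots> = liftn (Suc (Suc n)) V" using Suc.hyps[of k'] Suc.prems Suc by (simp add: liftn_Suc)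
    finally show ?thesis .
  qed
qed

lemma subst_liftn[simp]: "j < n \<Longrightarrow> acv_subst j U (liftn n V) = liftn (n - 1) V"
proof -
  assume "j < n"
  then obtain m where m: "n = Suc m" "j \<le> m" by (cases n) auto
  then have "liftn n V = acv_lift j (liftn m V)" by simp
  then have "acv_subst j U (liftn n V) = liftn m V" by (simp only: subst_lift)
  then show ?thesis using m by simp
qed

lemma liftn_simps[simp]:
  "liftn n (APair V W) = APair (liftn n V) (liftn n W)"
  "liftn n (AInl V) = AInl (liftn n V)"
  "liftn n (AInr V) = AInr (liftn n V)"
  "liftn n (ARoll V) = ARoll (liftn n V)"
  "liftn n AUnit = AUnit"
  "liftn n (AName b) = AName b"
  by (induct n) (simp_all add: liftn_Suc liftn_0 del: lift_liftn)

lemma fn_liftn[simp]: "acv_fn (liftn n V) = acv_fn V"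
  by (induct n) (simp_all add: liftn_Suc liftn_0 fn_lift del: lift_liftn)

fun tstep :: "actm \<Rightarrow> actm option" where
  "tstep (AApp V W) = (case V of ALam M \<Rightarrow> Some (actm_subst 0 W M)
      | ARec M \<Rightarrow> Some (actm_subst 0 (ARec M) (actm_subst 0 (acv_lift 0 W) M)) | _ \<Rightarrow> None)"
| "tstep (ALet M N) = (case M of AReturn V \<Rightarrow> Some (actm_subst 0 V N)
      | _ \<Rightarrow> map_option (\<lambda>M'. ALet M' N) (tstep M))"
| "tstep (ALetPair V M) = (case V of APair V1 W \<Rightarrow> Some (actm_subst 0 V1 (actm_subst 0 (acv_lift 0 W) M))
      | _ \<Rightarrow> None)"
| "tstep (ACase V M N) = (case V of AInl X \<Rightarrow> Some (actm_subst 0 X M)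
      | AInr X \<Rightarrow> Some (actm_subst 0 X N) | _ \<Rightarrow> None)"
| "tstep (AUnroll V) = (case V of ARoll X \<Rightarrow> Some (AReturn X) | _ \<Rightarrow> None)"
| "tstep (AReturn V) = None"
| "tstep (ASpawn M) = None"
| "tstep (ASend V W) = None"
| "tstep AReceive = None"
| "tstep ASelf = None"

lemma tstep_sound_aux: "(V::acv) = V" "\<And>M'. tstep M = Some M' \<Longrightarrow> act_tred M M'"
proof (induct V and M rule: acv.induct actm.induct)
  case (ALet M N M')
  show ?case
  proof (cases "\<exists>V. M = AReturn V")
    case True then show ?thesis using ALet by (auto intro: act_tred.intros)
  next
    case False
    from ALet(3) False have "map_option (\<lambda>M'. ALet M' N) (tstep M) = Some M'"
      by (cases M) auto
    then obtain M'' where "tstep M = Some M''" "M' = ALet M'' N" by auto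
    then show ?thesis using ALet(1)[of M''] act_tred.at_ctx[of M M'' "AELet AHole N"] by auto
  qed
qed (auto intro: act_tred.intros split: acv.splits)

lemmas tstep_sound = tstep_sound_aux(2)


fun run :: "nat \<Rightarrow> actm \<Rightarrow> actm" where
  "run 0 M = M"
| "run (Suc n) M = (case tstep M of None \<Rightarrow> M | Some M' \<Rightarrow> run n M')"

lemma run_numeral[simp]: "run (numeral k) M = (case tstep M of None \<Rightarrow> M | Some M' \<Rightarrow> run (pred_numeral k) M')"
  by (simp add: numeral_eq_Suc)

lemma run_sound: "act_tred\<^sup>*\<^sup>* M (run n M)"
proof (induct n arbitrary: M)
  case (Suc n) then show ?case
    by (cases "tstep M") (auto intro: converse_rtranclp_into_rtranclp tstep_sound)
qed simp

lemma run_trans: "act_tred\<^sup>*\<^sup>* (run n M) T \<Longrightarrow> act_tred\<^sup>*\<^sup>* M T"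
  using run_sound rtranclp_trans by metis

fun decomp :: "actm \<Rightarrow> acctx \<times> actm" where
  "decomp (ALet M N) = (case decomp M of (E, R) \<Rightarrow> (AELet E N, R))"
| "decomp M = (AHole, M)"

lemma plug_decomp: "ac_plug (fst (decomp M)) (snd (decomp M)) = M"
  by (induct M rule: decomp.induct) (auto split: prod.splits)

lemma tred_ctx_star: "act_tred\<^sup>*\<^sup>* M M' \<Longrightarrow> act_tred\<^sup>*\<^sup>* (ac_plug E M) (ac_plug E M')"
  by (induct rule: rtranclp_induct) (auto intro: rtranclp.rtrancl_into_rtrancl act_tred.at_ctx)

lemma let_star: "act_tred\<^sup>*\<^sup>* M M' \<Longrightarrow> act_tred\<^sup>*\<^sup>* (ALet M N) (ALet M' N)"
  using tred_ctx_star[of M M' "AELet AHole N"] by simp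

lemma actor_tred_star: "act_tred\<^sup>*\<^sup>* M M' \<Longrightarrow> act_red\<^sup>*\<^sup>* (Leaf (Actor a M Vs)) (Leaf (Actor a M' Vs))"
  by (induct rule: rtranclp_induct) (auto intro: rtranclp.rtrancl_into_rtrancl act_red.ar_liftm)

lemma actor_run_trans: "act_red\<^sup>*\<^sup>* (Leaf (Actor a (run n M) Vs)) T \<Longrightarrow> act_red\<^sup>*\<^sup>* (Leaf (Actor a M Vs)) T"
  using actor_tred_star[OF run_sound] rtranclp_trans by metis

lemma actor_tred_trans: "act_tred\<^sup>*\<^sup>* M M' \<Longrightarrow> act_red\<^sup>*\<^sup>* (Leaf (Actor a M' Vs)) T \<Longrightarrow> act_red\<^sup>*\<^sup>* (Leaf (Actor a M Vs)) T"
  using actor_tred_star rtranclp_trans by metis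

lemma red_recv: "snd (decomp M) = AReceive \<Longrightarrow>
  act_red (Leaf (Actor a M (W # Vs))) (Leaf (Actor a (ac_plug (fst (decomp M)) (AReturn W)) Vs))"
  using act_red.ar_receive[of a "fst (decomp M)" W Vs] plug_decomp[of M] by simp

lemma recv_trans: "snd (decomp M) = AReceive \<Longrightarrow>
  act_red\<^sup>*\<^sup>* (Leaf (Actor a (ac_plug (fst (decomp M)) (AReturn W)) Vs)) T \<Longrightarrow>
  act_red\<^sup>*\<^sup>* (Leaf (Actor a M (W # Vs))) T"
  by (metis converse_rtranclp_into_rtranclp red_recv)

lemma red_send: "snd (decomp M) = ASend V (AName b) \<Longrightarrow>
  act_red (Par (Leaf (Actor a M Vs)) (Leaf (Actor b N Ws)))
          (Par (Leaf (Actor a (ac_plug (fst (decomp M)) (AReturn AUnit)) Vs)) (Leaf (Actor b N (Ws @ [V]))))"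
  using act_red.ar_send[of a "fst (decomp M)" V b Vs N Ws] plug_decomp[of M] by simp

lemmas code_defs = a_body_def a_append_def a_drain_def a_nil_def a_cons_def

abbreviation "lcons \<equiv> (\<lambda>x acc. ARoll (AInr (APair x acc)))"

lemma app_run: "act_tred\<^sup>*\<^sup>* (AApp a_append (APair (liftn 0 (a_list xs)) (liftn 0 ys)))
   (AReturn (liftn 0 (foldr lcons xs ys)))"
proof (induct xs arbitrary: ys)
  case Nil
  show ?case
    apply (rule run_trans[of 5])
    apply (simp add: code_defs)
    done
next
  case (Cons x xs)
  show ?case
    apply (rule run_trans[of 6])
    apply (simp add: code_defs)
    apply (rule rtranclp_trans, rule let_star, rule Cons.hyps[unfolded code_defs, simplified])
    apply (rule run_trans[of 1])
    apply (simp add: code_defs)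
    done
qed

lemma app_run': "act_tred\<^sup>*\<^sup>* (AApp a_append (APair (liftn 0 (a_list xs)) V))
   (AReturn (liftn 0 (foldr lcons xs V)))"
proof -
  have "liftn 0 V = V" by (simp add: liftn_0)
  from app_run[of xs V, unfolded this] show ?thesis .
qed

lemma app_actor_trans:
  "act_red\<^sup>*\<^sup>* (Leaf (Actor a (ALet (AReturn (liftn 0 (foldr lcons xs V))) N) Vs)) T \<Longrightarrow>
   act_red\<^sup>*\<^sup>* (Leaf (Actor a (ALet (AApp a_append (APair (liftn 0 (a_list xs)) V)) N) Vs)) T"
  by (rule actor_tred_trans[OF let_star[OF app_run']])

lemma a_list_append: "a_list (xs @ ys) = foldr lcons xs (a_list ys)"
  by (induct xs) (auto simp: a_cons_def)

lemma buf_give: "act_red\<^sup>*\<^sup>* (Leaf (Actor a (AApp a_body (APair (a_list xs) a_nil)) [AInl w]))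
   (Leaf (Actor a (AApp a_body (APair (a_list (xs @ [w])) a_nil)) []))"
proof -
  have e1: "AApp a_body (APair (a_list xs) a_nil) = AApp a_body (APair (liftn 0 (a_list xs)) a_nil)"
    "AInl w = AInl (liftn 0 w)" by (simp_all add: liftn_0)
  have e3: "a_list (xs @ [w]) = liftn 0 (foldr lcons xs (lcons (liftn 0 w) (ARoll (AInl AUnit))))"
    by (simp add: a_list_append liftn_0 a_cons_def a_nil_def)
  show ?thesis
    unfolding e1 e3
    apply (rule actor_run_trans[where n=1])
    apply (simp add: code_defs)
    apply (rule recv_trans)
     apply simp
    apply (rule actor_run_trans[where n=3])
    apply (simp add: code_defs)
    apply (rule app_actor_trans[unfolded code_defs, simplified])
    apply (cases xs)
     apply (rule actor_run_trans[where n=10])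
     apply (simp add: code_defs)
    apply hypsubst
    apply (rule actor_run_trans[where n=10])
    apply (simp add: code_defs)
    done
qed


lemma par_star: "act_red\<^sup>*\<^sup>* C C' \<Longrightarrow> act_red\<^sup>*\<^sup>* (Par C D) (Par C' D)"
  by (induct rule: rtranclp_induct) (auto intro: rtranclp.rtrancl_into_rtrancl act_red.ar_par)

lemma par_trans: "act_red\<^sup>*\<^sup>* C C' \<Longrightarrow> act_red\<^sup>*\<^sup>* (Par C' D) T \<Longrightarrow> act_red\<^sup>*\<^sup>* (Par C D) T"
  using par_star rtranclp_trans by metis

lemma par_run_trans: "act_red\<^sup>*\<^sup>* (Par (Leaf (Actor a (run n M) Vs)) D) T \<Longrightarrow>
    act_red\<^sup>*\<^sup>* (Par (Leaf (Actor a M Vs)) D) T"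
  by (rule par_trans[OF actor_tred_star[OF run_sound]])

lemma par_recv_trans: "snd (decomp M) = AReceive \<Longrightarrow>
  act_red\<^sup>*\<^sup>* (Par (Leaf (Actor a (ac_plug (fst (decomp M)) (AReturn W)) Vs)) D) T \<Longrightarrow>
  act_red\<^sup>*\<^sup>* (Par (Leaf (Actor a M (W # Vs))) D) T"
  by (metis par_trans r_into_rtranclp red_recv)

lemma send_trans: "snd (decomp M) = ASend V (AName b) \<Longrightarrow>
  act_red\<^sup>*\<^sup>* (Par (Leaf (Actor a (ac_plug (fst (decomp M)) (AReturn AUnit)) Vs)) (Leaf (Actor b N (Ws @ [V])))) T \<Longrightarrow>
  act_red\<^sup>*\<^sup>* (Par (Leaf (Actor a M Vs)) (Leaf (Actor b N Ws))) T"
  by (metis converse_rtranclp_into_rtranclp red_send)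

lemma buf_take: "act_red\<^sup>*\<^sup>* (Par (Leaf (Actor a (AApp a_body (APair (a_list (w # vs)) a_nil)) [AInr (AName c)]))
      (Leaf (Actor c M [])))
   (Par (Leaf (Actor a (AApp a_body (APair (a_list vs) a_nil)) [])) (Leaf (Actor c M [w])))"
proof -
  have e1: "AApp a_body (APair (a_list (w # vs)) a_nil) = AApp a_body (APair (liftn 0 (a_list (w # vs))) a_nil)"
    "AApp a_body (APair (a_list vs) a_nil) = AApp a_body (APair (liftn 0 (a_list vs)) a_nil)"
    "[w] = [liftn 0 w]" by (simp_all add: liftn_0)
  show ?thesis
    unfolding e1
    apply (rule par_run_trans[where n=1])
    apply (simp add: code_defs)
    apply (rule par_recv_trans)
     apply simp
    apply (rule par_run_trans[where n=40])
    apply (simp add: code_defs)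
    apply (rule send_trans)
     apply simp
    apply (rule par_run_trans[where n=2])
    apply (simp add: code_defs)
    done
qed

abbreviation "ac \<equiv> act_cong"

lemma ac_sym: "ac C D \<Longrightarrow> ac D C" by (rule sc_sym)
lemma ac_trans: "ac C D \<Longrightarrow> ac D E \<Longrightarrow> ac C E" by (rule sc_trans)

lemma par_cong: "ac C C' \<Longrightarrow> ac D D' \<Longrightarrow> ac (Par C D) (Par C' D')"
proof -
  assume a: "ac C C'" "ac D D'"
  have "ac (Par C D) (Par C' D)" using a(1) by (rule sc_par)
  moreover have "ac (Par C' D) (Par C' D')"
    by (meson a(2) sc_comm sc_par sc_trans)
  ultimately show ?thesis by (rule sc_trans)
qed

lemma alpha_thread:
  assumes "b \<notin> actm_fn T" "c \<notin> actm_fn T"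
  shows "ac (Nu b (Leaf (Actor b T []))) (Nu c (Leaf (Actor c T [])))"
proof -
  have "c \<notin> cfg_fn acleaf_fn (Nu b (Leaf (Actor b T [])))" using assms by simp
  then have "ac (Nu b (Leaf (Actor b T []))) (Nu c (cfg_swap acleaf_swap b c (Leaf (Actor b T []))))"
    by (rule sc_alpha)
  moreover have "actm_swap b c T = T" using assms by (simp add: swap_id)
  ultimately show ?thesis by simp
qed

lemma fresh_tr: "fresh_name (actm_fn T) \<notin> actm_fn T"
  by (simp add: fresh_name fin_fn)

lemma tr_thread_any:
  assumes "b \<notin> actm_fn (tr_t M)"
  shows "ac (Nu b (Leaf (Actor b (tr_t M) []))) (tr_cfg (Leaf (Thread M)))"
  using alpha_thread[OF assms fresh_tr] by (simp add: Let_def)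

lemma extr_r: "c \<notin> cfg_fn acleaf_fn Y \<Longrightarrow> ac (Par (Nu c X) Y) (Nu c (Par X Y))"
  by (meson sc_comm sc_extr sc_nu sc_trans)

lemma fn_plug: "actm_fn (ac_plug E M) = actm_fn (ac_plug E AReceive) \<union> actm_fn M"
  by (induct E) auto

lemma fn_a_list[simp]: "acv_fn (a_list xs) = (\<Union>x\<in>set xs. acv_fn x)"
  by (induct xs) (auto simp: a_cons_def a_nil_def)

lemma fn_code[simp]: "acv_fn a_body = {}" "acv_fn a_nil = {}"
  by (simp_all add: code_defs)

lemma fn_tr_cfg: "cfg_fn acleaf_fn (tr_cfg C) = cfg_fn chleaf_fn C"
proof (induct C)
  case (Leaf l)
  then show ?case
  proof (cases l)
    case (Thread M)
    have "fresh_name (actm_fn (tr_t M)) \<notin> actm_fn (tr_t M)" by (rule fresh_tr)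
    then show ?thesis using Thread by (auto simp: Let_def tr_fn)
  next
    case (Buf a Vs)
    then show ?thesis by (auto simp: tr_fn)
  qed
qed auto

lemma swap_name_eq[simp]: "swap_name a b x = swap_name a b y \<longleftrightarrow> x = y"
  by (auto simp: swap_name_def)

lemma swap_a_list: "acv_swap a b (a_list xs) = a_list (map (acv_swap a b) xs)"
  by (induct xs) (auto simp: a_cons_def a_nil_def)

lemma swap_code[simp]: "acv_swap a b a_body = a_body" "acv_swap a b a_nil = a_nil"
  by (simp_all add: code_defs)

lemma tr_swap_cong: "ac (tr_cfg (cfg_swap chleaf_swap a b C)) (cfg_swap acleaf_swap a b (tr_cfg C))"
proof (induct C)
  case (Par C D) then show ?case by (simp add: par_cong)
next
  case (Nu c C) then show ?case by (simp add: sc_nu)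
next
  case (Leaf l)
  then show ?case
  proof (cases l)
    case (Thread M)
    define b0 where "b0 = fresh_name (actm_fn (tr_t M))"
    define T where "T = actm_swap a b (tr_t M)"
    have T: "tr_t (cht_swap a b M) = T" by (simp add: T_def tr_swap)
    have "b0 \<notin> actm_fn (tr_t M)" unfolding b0_def by (rule fresh_tr)
    then have h1: "swap_name a b b0 \<notin> actm_fn T" by (auto simp: T_def fn_swap)
    have "ac (Nu (swap_name a b b0) (Leaf (Actor (swap_name a b b0) T [])))
             (Nu (fresh_name (actm_fn T)) (Leaf (Actor (fresh_name (actm_fn T)) T [])))"
      by (rule alpha_thread[OF h1 fresh_tr])
    then show ?thesis using Thread T by (simp add: Let_def b0_def T_def ac_sym)
  next
    case (Buf c Vs)
    then show ?thesis by (simp add: swap_a_list tr_swap sc_refl comp_def)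
  qed
qed

lemma tr_cong: "ch_cong C D \<Longrightarrow> ac (tr_cfg C) (tr_cfg D)"
proof (induct rule: scong.induct)
  case (sc_extr a C D)
  then show ?case by (simp add: fn_tr_cfg scong.sc_extr)
next
  case (sc_alpha b a C)
  then have "b \<notin> cfg_fn acleaf_fn (Nu a (tr_cfg C))" by (simp add: fn_tr_cfg)
  then have "ac (Nu a (tr_cfg C)) (Nu b (cfg_swap acleaf_swap a b (tr_cfg C)))" by (rule scong.sc_alpha)
  moreover have "ac (Nu b (cfg_swap acleaf_swap a b (tr_cfg C))) (Nu b (tr_cfg (cfg_swap chleaf_swap a b C)))"
    by (rule sc_nu, rule ac_sym, rule tr_swap_cong)
  ultimately show ?case by (simp add: ac_trans)
next
  case (sc_refl C) show ?case by (rule scong.sc_refl)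
next
  case (sc_sym C D) then show ?case by (simp add: ac_sym)
next
  case (sc_trans C D E) then show ?case by (metis ac_trans)
next
  case (sc_comm C D) show ?case by (simp add: scong.sc_comm)
next
  case (sc_assoc C D E) show ?case by (simp add: scong.sc_assoc)
next
  case (sc_nu_comm a b C) show ?case by (simp add: scong.sc_nu_comm)
next
  case (sc_par C D E) then show ?case by (simp add: scong.sc_par)
next
  case (sc_nu C D a) then show ?case by (simp add: scong.sc_nu)
qed

lemma nu_star: "act_red\<^sup>*\<^sup>* C C' \<Longrightarrow> act_red\<^sup>*\<^sup>* (Nu a C) (Nu a C')"
  by (induct rule: rtranclp_induct) (auto intro: rtranclp.rtrancl_into_rtrancl act_red.ar_nu)

lemma star_cong:
  assumes "act_red\<^sup>*\<^sup>* P Q" "P \<noteq> Q" "ac P P'" "ac Q Q'"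
  shows "act_red\<^sup>*\<^sup>* P' Q'"
proof -
  from assms(1,2) obtain Y where s1: "act_red P Y" and s2: "act_red\<^sup>*\<^sup>* Y Q"
    by (metis converse_rtranclpE)
  show ?thesis
  proof (cases "Y = Q")
    case True
    have "act_red P' Q'" using s1 True by (meson act_red.ar_struct ac_sym assms(3,4))
    then show ?thesis by simp
  next
    case False
    then obtain Z where z1: "act_red\<^sup>*\<^sup>* Y Z" and z2: "act_red Z Q" using s2
      by (metis rtranclp.cases)
    have "act_red P' Y" using s1 by (meson act_red.ar_struct ac_sym assms(3) sc_refl)
    moreover have "act_red Z Q'" using z2 by (meson act_red.ar_struct assms(4) sc_refl)
    ultimately show ?thesis using z1 by (meson converse_rtranclp_into_rtranclp rtranclp.rtrancl_into_rtrancl)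
  qed
qed

lemma par_star_r: "act_red\<^sup>*\<^sup>* D D' \<Longrightarrow> act_red\<^sup>*\<^sup>* (Par C D) (Par C D')"
proof (cases "D = D'")
  case False
  assume "act_red\<^sup>*\<^sup>* D D'"
  then have "act_red\<^sup>*\<^sup>* (Par D C) (Par D' C)" by (rule par_star)
  moreover have "Par D C \<noteq> Par D' C" using False by simp
  ultimately show ?thesis using star_cong sc_comm by metis
qed simp

lemma cong_left:
  assumes "ac C C'" "act_red\<^sup>*\<^sup>* C' X"
  shows "\<exists>X'. act_red\<^sup>*\<^sup>* C X' \<and> ac X' X"
proof (cases "C' = X")
  case True then show ?thesis using assms by blast
next
  case False
  then show ?thesis using star_cong[OF assms(2) False ac_sym[OF assms(1)] sc_refl] sc_refl by blast
qed

lemma finish: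
  assumes "ac (tr_cfg C1) Z" "act_red\<^sup>*\<^sup>* Z Z'" "ac Z' (tr_cfg C2)"
  shows "\<exists>D. act_red\<^sup>*\<^sup>* (tr_cfg C1) D \<and> ac D (tr_cfg C2)"
  using cong_left[OF assms(1,2)] assms(3) ac_trans by blast

primrec tr_e :: "chctx \<Rightarrow> acctx" where
  "tr_e CHole = AHole"
| "tr_e (CELet E N) = AELet (tr_e E) (tr_t N)"

lemma tr_plug[simp]: "tr_t (ch_plug E M) = ac_plug (tr_e E) (tr_t M)"
  by (induct E) auto

primrec cc :: "acctx \<Rightarrow> acctx \<Rightarrow> acctx" where
  "cc AHole F = F"
| "cc (AELet E N) F = AELet (cc E F) N"

lemma plug_cc: "ac_plug (cc E F) M = ac_plug E (ac_plug F M)"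
  by (induct E) auto

lemma fn_plug2[simp]: "M \<noteq> AReceive \<Longrightarrow> actm_fn (ac_plug E M) = actm_fn (ac_plug E AReceive) \<union> actm_fn M"
  by (rule fn_plug)

lemma tred_tr: "ch_tred M M' \<Longrightarrow> act_tred (tr_t M) (tr_t M')"
  by (induct rule: ch_tred.induct) (auto simp: tr_subst tr_lift intro: act_tred.intros)

lemma ch_plug_fn: "cht_fn (ch_plug E M) = cht_fn (ch_plug E CNewCh) \<union> cht_fn M"
  by (induct E) auto

lemma tred_fn: "ch_tred M M' \<Longrightarrow> cht_fn M' \<subseteq> cht_fn M"
proof (induct rule: ch_tred.induct)
  case (ct_ctx M M' E)
  then show ?case by (metis Un_mono ch_plug_fn order_refl)
qed (auto dest!: subsetD[OF cfn_subst(2)] simp: cfn_lift)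

lemma ex_fresh: "finite S \<Longrightarrow> \<exists>c::name. c \<notin> S"
  by (simp add: ex_new_if_finite)

lemma fin_cfg: "finite (cfg_fn acleaf_fn C)"
proof (induct C)
  case (Leaf l) then show ?case by (cases l) (auto simp: fin_fn)
qed auto

lemma main: "ch_red C1 C2 \<Longrightarrow> \<exists>D. act_red\<^sup>*\<^sup>* (tr_cfg C1) D \<and> ac D (tr_cfg C2)"
proof (induct rule: ch_red.induct)
  case (cr_liftm M M')
  define b where "b = fresh_name (actm_fn (tr_t M))"
  have b: "b \<notin> actm_fn (tr_t M')"
    using fresh_tr[of "tr_t M"] tred_fn[OF cr_liftm] by (auto simp: b_def tr_fn)
  have "act_red (tr_cfg (Leaf (Thread M))) (Nu b (Leaf (Actor b (tr_t M') [])))"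
    using tred_tr[OF cr_liftm] by (auto simp: b_def Let_def intro: act_red.intros)
  then show ?case using tr_thread_any[OF b] by blast
next
  case (cr_par C C' D)
  then obtain X where "act_red\<^sup>*\<^sup>* (tr_cfg C) X" "ac X (tr_cfg C')" by blast
  then show ?case by (auto intro!: exI[of _ "Par X (tr_cfg D)"] par_star sc_par)
next
  case (cr_nu C C' a)
  then obtain X where "act_red\<^sup>*\<^sup>* (tr_cfg C) X" "ac X (tr_cfg C')" by blast
  then show ?case by (auto intro!: exI[of _ "Nu a X"] nu_star sc_nu)
next
  case (cr_struct C C' D' D)
  then obtain X where "act_red\<^sup>*\<^sup>* (tr_cfg C') X" "ac X (tr_cfg D')" by blast
  then show ?case using finish[OF tr_cong[OF cr_struct(1)], of X D] tr_cong[OF cr_struct(4)] ac_trans by blast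
next
  case (cr_give E W a Vs)
  define E' where "E' = tr_e E"
  define w where "w = tr_v W"
  define vs where "vs = map tr_v Vs"
  define T where "T = ac_plug E' (ASend (AInl w) (AName a))"
  define b where "b = fresh_name (actm_fn T)"
  define Y where "Y = Leaf (Actor a (AApp a_body (APair (a_list vs) a_nil)) [])"
  define Y' where "Y' = Leaf (Actor a (AApp a_body (APair (a_list (vs @ [w])) a_nil)) [])"
  have bT: "b \<notin> actm_fn T" unfolding b_def by (rule fresh_tr)
  obtain c where c: "c \<notin> actm_fn T \<union> cfg_fn acleaf_fn Y"
    using ex_fresh[of "actm_fn T \<union> cfg_fn acleaf_fn Y"] fin_fn fin_cfg by blast
  have t1: "tr_cfg (Par (Leaf (Thread (ch_plug E (CGive W (CName a))))) (Leaf (Buf a Vs)))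
      = Par (Nu b (Leaf (Actor b T []))) Y"
    by (simp add: T_def b_def E'_def w_def vs_def Y_def Let_def del: fn_plug2)
  define X where "X = Leaf (Actor c (ac_plug E' (AReturn AUnit)) [])"
  have cA: "c \<notin> actm_fn T" "c \<notin> cfg_fn acleaf_fn Y" using c by auto
  have cg1: "ac (Par (Nu b (Leaf (Actor b T []))) Y) (Nu c (Par (Leaf (Actor c T [])) Y))"
  proof -
    have "ac (Nu b (Leaf (Actor b T []))) (Nu c (Leaf (Actor c T [])))"
      by (rule alpha_thread[OF bT cA(1)])
    then have "ac (Par (Nu b (Leaf (Actor b T []))) Y) (Par (Nu c (Leaf (Actor c T []))) Y)"
      by (rule sc_par)
    moreover have "ac (Par (Nu c (Leaf (Actor c T []))) Y) (Nu c (Par (Leaf (Actor c T [])) Y))"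
      by (rule extr_r[OF cA(2)])
    ultimately show ?thesis by (rule ac_trans)
  qed
  have s1: "act_red (Par (Leaf (Actor c T [])) Y)
      (Par X (Leaf (Actor a (AApp a_body (APair (a_list vs) a_nil)) [AInl w])))"
    using act_red.ar_send[of c E' "AInl w" a "[]" "AApp a_body (APair (a_list vs) a_nil)" "[]"]
    by (simp add: T_def X_def Y_def)
  have s2: "act_red\<^sup>*\<^sup>* (Par X (Leaf (Actor a (AApp a_body (APair (a_list vs) a_nil)) [AInl w]))) (Par X Y')"
    unfolding Y'_def by (intro par_star_r buf_give)
  have cw: "c \<notin> acv_fn w" "c \<noteq> a" "c \<notin> actm_fn (ac_plug E' AReceive)"
    "c \<notin> (\<Union>x\<in>set vs. acv_fn x)" using cA by (simp_all add: T_def Y_def)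
  have c1: "ac (Nu c (Par X Y')) (Par (Nu c X) Y')"
    by (rule ac_sym, rule extr_r) (use cw in \<open>auto simp: Y'_def\<close>)
  have c2: "ac (Par (Nu c X) Y') (tr_cfg (Par (Leaf (Thread (ch_plug E (CReturn CUnit)))) (Leaf (Buf a (Vs @ [W])))))"
  proof -
    have "ac (Nu c X) (tr_cfg (Leaf (Thread (ch_plug E (CReturn CUnit)))))"
      unfolding X_def E'_def[symmetric] using tr_thread_any[of c "ch_plug E (CReturn CUnit)"] cw
      by (simp add: E'_def)
    then show ?thesis by (simp add: Y'_def vs_def w_def sc_par)
  qed
  show ?case
    apply (rule finish[of _ "Nu c (Par (Leaf (Actor c T [])) Y)"])
      apply (unfold t1, rule cg1)
     apply (rule nu_star, rule converse_rtranclp_into_rtranclp[OF s1 s2])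
    by (rule ac_trans[OF c1 c2])
next
  case (cr_take E a W Vs)
  define E' where "E' = tr_e E"
  define w where "w = tr_v W"
  define vs where "vs = map tr_v Vs"
  define K where "K = ALet (ASend (AInr (AVar 0)) (AName a)) AReceive"
  define T where "T = ac_plug E' (ALet ASelf K)"
  define b where "b = fresh_name (actm_fn T)"
  define B where "B = AApp a_body (APair (a_list (w # vs)) a_nil)"
  define Y where "Y = Leaf (Actor a B [])"
  define Yf where "Yf = Leaf (Actor a (AApp a_body (APair (a_list vs) a_nil)) [])"
  have bT: "b \<notin> actm_fn T" unfolding b_def by (rule fresh_tr)
  obtain c where c: "c \<notin> actm_fn T \<union> cfg_fn acleaf_fn Y"
    using ex_fresh[of "actm_fn T \<union> cfg_fn acleaf_fn Y"] fin_fn fin_cfg by blast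
  have t1: "tr_cfg (Par (Leaf (Thread (ch_plug E (CTake (CName a))))) (Leaf (Buf a (W # Vs))))
      = Par (Nu b (Leaf (Actor b T []))) Y"
    by (simp add: T_def K_def b_def E'_def w_def vs_def Y_def B_def Let_def del: fn_plug2)
  have cA: "c \<notin> actm_fn T" "c \<notin> cfg_fn acleaf_fn Y" using c by auto
  have cg1: "ac (Par (Nu b (Leaf (Actor b T []))) Y) (Nu c (Par (Leaf (Actor c T [])) Y))"
  proof -
    have "ac (Nu b (Leaf (Actor b T []))) (Nu c (Leaf (Actor c T [])))"
      by (rule alpha_thread[OF bT cA(1)])
    then have "ac (Par (Nu b (Leaf (Actor b T []))) Y) (Par (Nu c (Leaf (Actor c T []))) Y)"
      by (rule sc_par)
    moreover have "ac (Par (Nu c (Leaf (Actor c T []))) Y) (Nu c (Par (Leaf (Actor c T [])) Y))"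
      by (rule extr_r[OF cA(2)])
    ultimately show ?thesis by (rule ac_trans)
  qed
  define R where "R = ac_plug E' AReceive"
  have s1: "act_red (Par (Leaf (Actor c T [])) Y)
      (Par (Leaf (Actor c (ac_plug E' (ALet (AReturn (AName c)) K)) [])) Y)"
    using act_red.ar_self[of c "cc E' (AELet AHole K)" "[]"]
    by (intro act_red.ar_par) (simp add: T_def plug_cc)
  have s2: "act_red (Par (Leaf (Actor c (ac_plug E' (ALet (AReturn (AName c)) K)) [])) Y)
      (Par (Leaf (Actor c (ac_plug E' (ALet (ASend (AInr (AName c)) (AName a)) AReceive)) [])) Y)"
    using act_tred.at_ctx[OF act_tred.at_let[of "AName c" K], of E']
    by (intro act_red.ar_par act_red.ar_liftm) (simp add: K_def)
  have s3: "act_red (Par (Leaf (Actor c (ac_plug E' (ALet (ASend (AInr (AName c)) (AName a)) AReceive)) [])) Y)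
      (Par (Leaf (Actor c (ac_plug E' (ALet (AReturn AUnit) AReceive)) [])) (Leaf (Actor a B [AInr (AName c)])))"
    using act_red.ar_send[of c "cc E' (AELet AHole AReceive)" "AInr (AName c)" a "[]" B "[]"]
    by (simp add: plug_cc Y_def)
  have s4: "act_red (Par (Leaf (Actor c (ac_plug E' (ALet (AReturn AUnit) AReceive)) [])) (Leaf (Actor a B [AInr (AName c)])))
      (Par (Leaf (Actor c R [])) (Leaf (Actor a B [AInr (AName c)])))"
    using act_tred.at_ctx[OF act_tred.at_let[of AUnit AReceive], of E']
    by (intro act_red.ar_par act_red.ar_liftm) (simp add: R_def)
  have s5: "act_red\<^sup>*\<^sup>* (Par (Leaf (Actor c R [])) (Leaf (Actor a B [AInr (AName c)])))
      (Par (Leaf (Actor c R [w])) Yf)"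
  proof -
    have "act_red\<^sup>*\<^sup>* (Par (Leaf (Actor a B [AInr (AName c)])) (Leaf (Actor c R [])))
      (Par Yf (Leaf (Actor c R [w])))" unfolding B_def Yf_def by (rule buf_take)
    moreover have "Par (Leaf (Actor a B [AInr (AName c)])) (Leaf (Actor c R [])) \<noteq> Par Yf (Leaf (Actor c R [w]))"
      by (simp add: Yf_def)
    ultimately show ?thesis using star_cong sc_comm by metis
  qed
  define X where "X = Leaf (Actor c (ac_plug E' (AReturn w)) [])"
  have s6: "act_red (Par (Leaf (Actor c R [w])) Yf) (Par X Yf)"
    using act_red.ar_receive[of c E' w "[]"] by (intro act_red.ar_par) (simp add: R_def X_def)
  have cw: "c \<notin> acv_fn w" "c \<noteq> a" "c \<notin> actm_fn (ac_plug E' AReceive)"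
    "c \<notin> (\<Union>x\<in>set vs. acv_fn x)" using cA by (simp_all add: T_def K_def Y_def B_def a_cons_def)
  have c1: "ac (Nu c (Par X Yf)) (Par (Nu c X) Yf)"
    by (rule ac_sym, rule extr_r) (use cw in \<open>auto simp: Yf_def\<close>)
  have c2: "ac (Par (Nu c X) Yf) (tr_cfg (Par (Leaf (Thread (ch_plug E (CReturn W)))) (Leaf (Buf a Vs))))"
  proof -
    have "ac (Nu c X) (tr_cfg (Leaf (Thread (ch_plug E (CReturn W)))))"
      unfolding X_def using tr_thread_any[of c "ch_plug E (CReturn W)"] cw
      by (simp add: E'_def w_def)
    then show ?thesis by (simp add: Yf_def vs_def w_def sc_par)
  qed
  have st: "act_red\<^sup>*\<^sup>* (Par (Leaf (Actor c T [])) Y) (Par X Yf)"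
    using s1 s2 s3 s4 s5 s6
    by (meson converse_rtranclp_into_rtranclp rtranclp.rtrancl_into_rtrancl)
  show ?case
    apply (rule finish[of _ "Nu c (Par (Leaf (Actor c T [])) Y)"])
      apply (unfold t1, rule cg1)
     apply (rule nu_star, rule st)
    by (rule ac_trans[OF c1 c2])
next
  case (cr_fork E M)
  define E' where "E' = tr_e E"
  define m where "m = tr_t M"
  define T where "T = ac_plug E' (ALet (ASpawn m) (AReturn AUnit))"
  define b where "b = fresh_name (actm_fn T)"
  have bT: "b \<notin> actm_fn T" unfolding b_def by (rule fresh_tr)
  obtain c where c: "c \<notin> insert b (actm_fn T)" using ex_fresh[of "insert b (actm_fn T)"] fin_fn by auto
  have t1: "tr_cfg (Leaf (Thread (ch_plug E (CFork M)))) = Nu b (Leaf (Actor b T []))"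
    by (simp add: T_def b_def E'_def m_def Let_def del: fn_plug2)
  define X where "X = Leaf (Actor b (ac_plug E' (AReturn AUnit)) [])"
  define Y where "Y = Leaf (Actor c m [])"
  have s1: "act_red (Nu b (Leaf (Actor b T [])))
     (Nu b (Nu c (Par (Leaf (Actor b (ac_plug E' (ALet (AReturn (AName c)) (AReturn AUnit))) [])) Y)))"
    using act_red.ar_spawn[of c b "cc E' (AELet AHole (AReturn AUnit))" m "[]"] c
    by (auto simp: plug_cc T_def Y_def intro!: act_red.ar_nu)
  have s2: "act_red (Nu b (Nu c (Par (Leaf (Actor b (ac_plug E' (ALet (AReturn (AName c)) (AReturn AUnit))) [])) Y)))
     (Nu b (Nu c (Par X Y)))"
    unfolding X_def
    apply (intro act_red.ar_nu act_red.ar_par act_red.ar_liftm)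
    using act_red.ar_liftm act_tred.at_ctx[OF act_tred.at_let[of "AName c" "AReturn AUnit"], of E'] by simp
  have c1: "ac (Nu b (Nu c (Par X Y))) (Nu b (Par X (Nu c Y)))"
    by (rule sc_nu, rule ac_sym, rule sc_extr) (use c bT in \<open>auto simp: X_def T_def\<close>)
  have c2: "ac (Nu b (Par X (Nu c Y))) (Par (Nu b X) (Nu c Y))"
    by (rule ac_sym, rule extr_r) (use c bT in \<open>auto simp: Y_def T_def m_def\<close>)
  have c3: "ac (Par (Nu b X) (Nu c Y)) (tr_cfg (Par (Leaf (Thread (ch_plug E (CReturn CUnit)))) (Leaf (Thread M))))"
  proof -
    have bf: "b \<notin> actm_fn (ac_plug E' AReceive)" "b \<notin> actm_fn m"
      "c \<notin> actm_fn (ac_plug E' AReceive)" "c \<notin> actm_fn m" using bT c by (simp_all add: T_def)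
    have th1: "ac (Nu b X) (tr_cfg (Leaf (Thread (ch_plug E (CReturn CUnit)))))"
      using tr_thread_any[of b "ch_plug E (CReturn CUnit)"] bf by (simp add: X_def E'_def)
    have th2: "ac (Nu c Y) (tr_cfg (Leaf (Thread M)))"
      using tr_thread_any[of c M] bf by (simp add: Y_def m_def)
    show ?thesis by (simp only: tr_cfg.simps(1)) (rule par_cong[OF th1 th2])
  qed
  show ?case
    apply (rule finish[of _ "Nu b (Leaf (Actor b T []))"])
      apply (unfold t1, rule sc_refl)
     apply (rule converse_rtranclp_into_rtranclp[of act_red, OF s1], rule r_into_rtranclp[of act_red], rule s2)
    by (rule ac_trans[OF c1 ac_trans[OF c2 c3]])
next
  case (cr_newch a E)
  define E' where "E' = tr_e E"
  define BI where "BI = AApp a_body (APair a_nil a_nil)"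
  define T where "T = ac_plug E' (ASpawn BI)"
  define b where "b = fresh_name (actm_fn T)"
  have bT: "b \<notin> actm_fn T" unfolding b_def by (rule fresh_tr)
  have aT: "a \<notin> actm_fn T" using cr_newch tr_fn(2)[of "ch_plug E CNewCh"]
    by (simp add: T_def E'_def BI_def del: fn_plug2)
  obtain b0 where b0: "b0 \<notin> insert a (actm_fn T)" using ex_fresh[of "insert a (actm_fn T)"] fin_fn by auto
  have t1: "tr_cfg (Leaf (Thread (ch_plug E CNewCh))) = Nu b (Leaf (Actor b T []))"
    by (simp add: T_def b_def E'_def BI_def Let_def del: fn_plug2)
  define X where "X = Leaf (Actor b0 (ac_plug E' (AReturn (AName a))) [])"
  define Y where "Y = Leaf (Actor a BI [])"
  have cg1: "ac (Nu b (Leaf (Actor b T []))) (Nu b0 (Leaf (Actor b0 T [])))"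
    using bT b0 by (intro alpha_thread) auto
  have s1: "act_red (Nu b0 (Leaf (Actor b0 T []))) (Nu b0 (Nu a (Par X Y)))"
    using act_red.ar_spawn[of a b0 E' BI "[]"] b0 aT
    by (auto simp: T_def X_def Y_def intro!: act_red.ar_nu)
  have c1: "ac (Nu b0 (Nu a (Par X Y))) (Nu a (Nu b0 (Par X Y)))" by (rule sc_nu_comm)
  have c2: "ac (Nu a (Nu b0 (Par X Y))) (Nu a (Par (Nu b0 X) Y))"
    by (rule sc_nu, rule ac_sym, rule extr_r) (use b0 in \<open>auto simp: Y_def BI_def\<close>)
  have c3: "ac (Nu a (Par (Nu b0 X) Y))
     (tr_cfg (Nu a (Par (Leaf (Thread (ch_plug E (CReturn (CName a))))) (Leaf (Buf a [])))))"
  proof -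
    have bf: "b0 \<notin> actm_fn (ac_plug E' AReceive)" "b0 \<noteq> a" using b0 by (simp_all add: T_def)
    have th1: "ac (Nu b0 X) (tr_cfg (Leaf (Thread (ch_plug E (CReturn (CName a))))))"
      using tr_thread_any[of b0 "ch_plug E (CReturn (CName a))"] bf by (simp add: X_def E'_def)
    have "ac (Par (Nu b0 X) Y) (Par (tr_cfg (Leaf (Thread (ch_plug E (CReturn (CName a)))))) (tr_cfg (Leaf (Buf a []))))"
      using th1 by (simp add: Y_def BI_def sc_par)
    then show ?thesis by (simp only: tr_cfg.simps(1,2)) (rule sc_nu)
  qed
  show ?case
    apply (rule finish[of _ "Nu b0 (Leaf (Actor b0 T []))"])
      apply (unfold t1, rule cg1)
     apply (rule r_into_rtranclp[of act_red], rule s1)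
    by (rule ac_trans[OF c1 ac_trans[OF c2 c3]])
qed

theorem theorem27:
  assumes "ch_cty A N G Delta C1"
    and "ch_red C1 C2"
  shows "\<exists>D. act_red\<^sup>*\<^sup>* (tr_cfg C1) D \<and> act_cong D (tr_cfg C2)"
  using main[OF assms(2)] .

end
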